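(* Let $K\ge 2$, and let $\boldsymbol{x}_k$, $r_f$, $\boldsymbol{f}_k$, $\boldsymbol{f}$, $\boldsymbol{\eta}^{(\ell)}$ be as in the context. Fix $\ell\le r_f$ and define $w^{(\ell)}=[\lambda_\ell(\operatorname{cov}(\boldsymbol{f}))]^{-1/2}(\boldsymbol{\eta}^{(\ell)})^\top\boldsymbol{f}$ and, for $k\le K$, $z_k^{(\ell)}=0$ if $\boldsymbol{\eta}_k^{(\ell)}=\boldsymbol{0}$ and $z_k^{(\ell)}=(\boldsymbol{\eta}_k^{(\ell)}/\|\boldsymbol{\eta}_k^{(\ell)}\|_F)^\top\boldsymbol{f}_k$ otherwise. For a real number $\alpha$, put $c=\alpha w^{(\ell)}$ and $d_k=z_k^{(\ell)}-c$ ($k\le K$). Let $\alpha^{(\ell)}$ be defined by: (C.1) $|\alpha^{(\ell)}|$ is the smallest value of $|\alpha|$ such that at least one pair $j\neq k$ satisfies $d_j\perp d_k$; (C.2) if (C.1) admits two values of $\alpha$, then $\alpha^{(\ell)}$ is the negative one. For $1\le j<k\le K$ let $$\Delta^{(\ell)}_{jk}=\big[\cos\{\theta(w^{(\ell)},z_j^{(\ell)})\}+\cos\{\theta(w^{(\ell)},z_k^{(\ell)})\}\big]^2-4\cos\{\theta(z_j^{(\ell)},z_k^{(\ell)})\}.$$ Then $\alpha^{(\ell)}$ exists (in particular, there is at least one pair $j<k$ with $\Delta^{(\ell)}_{jk}\ge 0$), and $$\alpha^{(\ell)}\in\operatorname*{argmin}_{\alpha^{(\ell)}_{jk}}\Big\{|\alpha^{(\ell)}_{jk}|:\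 \alpha^{(\ell)}_{jk}=\tfrac12\big[\cos\{\theta(w^{(\ell)},z_j^{(\ell)})\}+\cos\{\theta(w^{(\ell)},z_k^{(\ell)})\}-(\Delta^{(\ell)}_{jk})^{1/2}\big],\ \Delta^{(\ell)}_{jk}\ge0,\ 1\le j<k\le K\Big\}.$$
   Context: $\mathcal{L}_0^2$ denotes the vector space of real-valued random variables with zero mean and finite variance, endowed with the covariance as inner product; $\|x\|=\sqrt{\operatorname{var}(x)}$, $\perp$ means zero covariance, and $\theta(x,y)$ is the angle in this inner product space, so $\cos\{\theta(x,y)\}=\operatorname{corr}(x,y)$ with the convention $\operatorname{corr}(x,0)=0$. $\boldsymbol{x}_1,\dots,\boldsymbol{x}_K$ are random vectors ($\boldsymbol{x}_k\in\mathbb{R}^{p_k}$) with entries in $\mathcal{L}_0^2$; $\operatorname{span}(\boldsymbol{x}_k^\top)$ is the subspace spanned by the entries of $\boldsymbol{x}_k$, of dimension $r_k\ge1$; $r_f=\dim\sum_k\operatorname{span}(\boldsymbol{x}_k^\top)$. $\boldsymbol{f}_k\in\mathbb{R}^{r_k}$ is a random vector whose entries form an orthonormal basis of $\operatorname{span}(\boldsymbol{x}_k^\top)$, $\boldsymbol{f}=(\boldsymbol{f}_1^\top,\dots,\boldsymbol{f}_K^\top)^\top$, and $\boldsymbol{\eta}^{(1)},\dots,\boldsymbol{\eta}^{(r_f)}$ are orthonormal eigenvectors of $\operatorname{cov}(\boldsymbol{f})$, $\boldsymbol{\eta}^{(\ell)}$ corresponding to its $\ell$th largest eigenvalue $\lambda_\ell(\operatorname{cov}(\boldsymbol{f}))$,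 partitioned as $\boldsymbol{\eta}^{(\ell)}=((\boldsymbol{\eta}^{(\ell)}_1)^\top,\dots,(\boldsymbol{\eta}^{(\ell)}_K)^\top)^\top$ with $\boldsymbol{\eta}^{(\ell)}_k\in\mathbb{R}^{r_k}$. *)

theory Defs
  imports "HOL-Analysis.Analysis"
begin

text \<open>The space L_0^2 with covariance inner product is modelled by an abstract
real inner product space 'a. corr x y is the cosine of the angle, with the
convention corr x 0 = corr 0 y = 0.\<close>

definition corr :: "'a::real_inner \<Rightarrow> 'a \<Rightarrow> real" where
  "corr x y = (if x = 0 \<or> y = 0 then 0 else inner x y / (norm x * norm y))"

text \<open>Index set of the stacked vector f = (f_1,...,f_K): pairs (k,i), k<K, i<r k (0-based).\<close>

definition idx :: "nat \<Rightarrow> (nat \<Rightarrow> nat) \<Rightarrow> (nat \<times> nat) set" where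
  "idx K r = Sigma {..<K} (\<lambda>k. {..<r k})"

definition covf :: "(nat \<Rightarrow> nat \<Rightarrow> 'a::real_inner) \<Rightarrow> nat \<times> nat \<Rightarrow> nat \<times> nat \<Rightarrow> real" where
  "covf f p q = inner (f (fst p) (snd p)) (f (fst q) (snd q))"

definition wvec :: "nat \<Rightarrow> (nat \<Rightarrow> nat) \<Rightarrow> (nat \<Rightarrow> nat \<Rightarrow> 'a::real_inner)
    \<Rightarrow> real \<Rightarrow> (nat \<times> nat \<Rightarrow> real) \<Rightarrow> 'a" where
  "wvec K r f lam eta = inverse (sqrt lam) *\<^sub>R (\<Sum>p\<in>idx K r. eta p *\<^sub>R f (fst p) (snd p))"

definition blocknorm :: "(nat \<Rightarrow> nat) \<Rightarrow> (nat \<times> nat \<Rightarrow> real) \<Rightarrow> nat \<Rightarrow> real" where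
  "blocknorm r eta k = sqrt (\<Sum>i<r k. (eta (k, i))\<^sup>2)"

definition zvec :: "(nat \<Rightarrow> nat) \<Rightarrow> (nat \<Rightarrow> nat \<Rightarrow> 'a::real_inner)
    \<Rightarrow> (nat \<times> nat \<Rightarrow> real) \<Rightarrow> nat \<Rightarrow> 'a" where
  "zvec r f eta k = (if (\<forall>i<r k. eta (k, i) = 0) then 0
     else (\<Sum>i<r k. (eta (k, i) / blocknorm r eta k) *\<^sub>R f k i))"

definition orth_alphas :: "nat \<Rightarrow> 'a::real_inner \<Rightarrow> (nat \<Rightarrow> 'a) \<Rightarrow> real set" where
  "orth_alphas K w z = {a. \<exists>j<K. \<exists>k<K. j \<noteq> k \<and> inner (z j - a *\<^sub>R w) (z k - a *\<^sub>R w) = 0}"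

definition is_alpha :: "nat \<Rightarrow> 'a::real_inner \<Rightarrow> (nat \<Rightarrow> 'a) \<Rightarrow> real \<Rightarrow> bool" where
  "is_alpha K w z a \<longleftrightarrow>
     a \<in> orth_alphas K w z \<and> (\<forall>b\<in>orth_alphas K w z. \<bar>a\<bar> \<le> \<bar>b\<bar>) \<and>
     (a \<noteq> 0 \<and> - a \<in> orth_alphas K w z \<longrightarrow> a < 0)"

definition Delta :: "'a::real_inner \<Rightarrow> (nat \<Rightarrow> 'a) \<Rightarrow> nat \<Rightarrow> nat \<Rightarrow> real" where
  "Delta w z j k = (corr w (z j) + corr w (z k))\<^sup>2 - 4 * corr (z j) (z k)"

definition cand_alphas :: "nat \<Rightarrow> 'a::real_inner \<Rightarrow> (nat \<Rightarrow> 'a) \<Rightarrow> real set" where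
  "cand_alphas K w z = {(corr w (z j) + corr w (z k) - sqrt (Delta w z j k)) / 2 | j k.
      j < k \<and> k < K \<and> Delta w z j k \<ge> 0}"

end

theory Submission
  imports Defs "Jordan_Normal_Form.Determinant"
begin


lemma corr_commute: "corr x y = corr y x"
  by (auto simp: corr_def inner_commute mult.commute)

lemma Delta_commute: "Delta w z j k = Delta w z k j"
  by (simp add: Delta_def corr_commute add.commute)

lemma quad_eq:
  fixes w :: "'a::real_inner"
  assumes w: "norm w = 1" and zj: "zj = 0 \<or> norm zj = 1" and zk: "zk = 0 \<or> norm zk = 1"
  shows "inner (zj - a *\<^sub>R w) (zk - a *\<^sub>R w) = a\<^sup>2 - (corr w zj + corr w zk) * a + corr zj zk"
proof -
  have w0: "w \<noteq> 0" using w by auto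
  have 1: "inner w zj = corr w zj" using zj w0 w by (auto simp: corr_def)
  have 2: "inner w zk = corr w zk" using zk w0 w by (auto simp: corr_def)
  have 3: "inner zj zk = corr zj zk" using zj zk by (auto simp: corr_def)
  have 4: "inner w w = 1" using w by (metis power2_norm_eq_inner power_one)
  have "inner (zj - a *\<^sub>R w) (zk - a *\<^sub>R w) = inner zj zk - a * inner w zk - a * inner w zj + a * a * inner w w"
    by (simp add: inner_diff_left inner_diff_right inner_commute algebra_simps)
  then show ?thesis using 1 2 3 4 by (simp add: power2_eq_square algebra_simps)
qed

lemma quad_roots:
  fixes a S \<rho> :: real
  shows "a\<^sup>2 - S*a + \<rho> = 0 \<longleftrightarrow> (S\<^sup>2 - 4*\<rho> \<ge> 0 \<and> (a = (S - sqrt (S\<^sup>2 - 4*\<rho>))/2 \<or> a = (S + sqrt (S\<^sup>2 - 4*\<rho>))/2))"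
proof
  assume h: "a\<^sup>2 - S*a + \<rho> = 0"
  have e: "(2*a - S)\<^sup>2 = S\<^sup>2 - 4*\<rho>" using h by (simp add: power2_eq_square algebra_simps)
  hence "S\<^sup>2 - 4*\<rho> \<ge> 0" by (metis zero_le_power2)
  moreover have "sqrt (S\<^sup>2 - 4*\<rho>) = \<bar>2*a - S\<bar>" using e by (metis real_sqrt_abs)
  ultimately show "S\<^sup>2 - 4*\<rho> \<ge> 0 \<and> (a = (S - sqrt (S\<^sup>2 - 4*\<rho>))/2 \<or> a = (S + sqrt (S\<^sup>2 - 4*\<rho>))/2)"
    by (auto simp: abs_if)
next
  assume h: "S\<^sup>2 - 4*\<rho> \<ge> 0 \<and> (a = (S - sqrt (S\<^sup>2 - 4*\<rho>))/2 \<or> a = (S + sqrt (S\<^sup>2 - 4*\<rho>))/2)"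
  then have s: "(sqrt (S\<^sup>2 - 4*\<rho>))\<^sup>2 = S\<^sup>2 - 4*\<rho>" by simp
  have "2*a - S = - sqrt (S\<^sup>2 - 4*\<rho>) \<or> 2*a - S = sqrt (S\<^sup>2 - 4*\<rho>)" using h by auto
  hence "(2*a - S)\<^sup>2 = (sqrt (S\<^sup>2 - 4*\<rho>))\<^sup>2" by (metis power2_minus)
  with s have "(2*a - S)\<^sup>2 = S\<^sup>2 - 4*\<rho>" by simp
  then show "a\<^sup>2 - S*a + \<rho> = 0" by (simp add: power2_eq_square algebra_simps)
qed


lemma corr_inner:
  fixes w :: "'a::real_inner"
  assumes "norm w = 1" "z = 0 \<or> norm z = 1"
  shows "corr w z = inner w z"
  using assms by (auto simp: corr_def)

lemma exists_pair:
  fixes w :: "'a::real_inner" and z :: "nat \<Rightarrow> 'a" and \<beta> :: "nat \<Rightarrow> real"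
  assumes K2: "K \<ge> 2" and w1: "norm w = 1"
   and zn: "\<And>k. k<K \<Longrightarrow> z k = 0 \<or> norm (z k) = 1"
   and wsum: "w = (\<Sum>k<K. \<beta> k *\<^sub>R z k)"
   and bpos: "\<And>k. k<K \<Longrightarrow> z k \<noteq> 0 \<Longrightarrow> \<beta> k > 0"
  shows "\<exists>j k. j < k \<and> k < K \<and> Delta w z j k \<ge> 0"
proof -
  have sym: "\<exists>j k. j < k \<and> k < K \<and> Delta w z j k \<ge> 0" if "j < K" "k < K" "j \<noteq> k" "Delta w z j k \<ge> 0" for j k
  proof (cases "j < k")
    case True then show ?thesis using that by blast
  next
    case False then have "k < j" using that by auto
    then show ?thesis using that Delta_commute[of w z j k] by metis
  qed
  show ?thesis
  proof (cases "\<exists>j<K. z j = 0")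
    case True
    then obtain j where j: "j < K" "z j = 0" by blast
    define k where "k = (if j = 0 then 1 else (0::nat))"
    have k: "k < K" "j \<noteq> k" using K2 j by (auto simp: k_def)
    have "Delta w z j k \<ge> 0" using j by (simp add: Delta_def corr_def)
    then show ?thesis using sym j k by blast
  next
    case False
    hence nz: "\<And>k. k < K \<Longrightarrow> z k \<noteq> 0" by blast
    hence bp: "\<And>k. k < K \<Longrightarrow> \<beta> k > 0" using bpos by blast
    define B where "B = (\<Sum>k<K. \<beta> k)"
    have Bp: "B > 0" unfolding B_def using K2 bp by (intro sum_pos) (auto simp: lessThan_empty_iff)
    define a where "a = 1 / B"
    define d where "d k = z k - a *\<^sub>R w" for k
    have "(\<Sum>k<K. \<beta> k *\<^sub>R d k) = w - (a * B) *\<^sub>R w"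
      by (simp add: d_def scaleR_diff_right sum_subtractf wsum[symmetric] B_def scaleR_sum_left sum_distrib_left mult.commute)
    also have "\<dots> = 0" using Bp by (simp add: a_def)
    finally have s0: "(\<Sum>k<K. \<beta> k *\<^sub>R d k) = 0" .
    have "0 = inner (\<Sum>j<K. \<beta> j *\<^sub>R d j) (\<Sum>k<K. \<beta> k *\<^sub>R d k)" by (simp add: s0)
    also have "\<dots> = (\<Sum>j<K. \<Sum>k<K. \<beta> j * \<beta> k * inner (d j) (d k))"
      by (simp add: inner_sum_left inner_sum_right sum_distrib_left mult.assoc)
         (subst sum.swap, simp add: inner_commute mult.left_commute)
    finally have tot: "(\<Sum>j<K. \<Sum>k<K. \<beta> j * \<beta> k * inner (d j) (d k)) = 0" by simp
    have "\<exists>j<K. \<exists>k<K. j \<noteq> k \<and> inner (d j) (d k) \<le> 0"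
    proof (rule ccontr)
      assume "\<not> ?thesis"
      hence pos: "\<And>j k. j<K \<Longrightarrow> k<K \<Longrightarrow> j \<noteq> k \<Longrightarrow> inner (d j) (d k) > 0" by force
      have t0: "\<beta> j * \<beta> k * inner (d j) (d k) \<ge> 0" if "j<K" "k<K" for j k
      proof (cases "j = k")
        case True then show ?thesis using bp[OF that(1)] by simp
      next
        case False then show ?thesis using bp[OF that(1)] bp[OF that(2)] pos[OF that False] by simp
      qed
      have t1: "\<beta> 0 * \<beta> 1 * inner (d 0) (d 1) > 0" using K2 bp pos[of 0 1] by simp
      have "(\<Sum>k<K. \<beta> 0 * \<beta> k * inner (d 0) (d k)) > 0"
        using K2 t0 t1 by (intro sum_pos2[where i=1]) auto
      hence "(\<Sum>j<K. \<Sum>k<K. \<beta> j * \<beta> k * inner (d j) (d k)) > 0"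
        using K2 t0 by (intro sum_pos2[where i=0 and f="\<lambda>j. \<Sum>k<K. \<beta> j * \<beta> k * inner (d j) (d k)"]) (auto intro: sum_nonneg)
      with tot show False by simp
    qed
    then obtain j k where jk: "j<K" "k<K" "j \<noteq> k" "inner (d j) (d k) \<le> 0" by blast
    have "inner (d j) (d k) = a\<^sup>2 - (corr w (z j) + corr w (z k)) * a + corr (z j) (z k)"
      unfolding d_def using quad_eq[OF w1 zn[OF jk(1)] zn[OF jk(2)]] .
    with jk(4) have "Delta w z j k \<ge> (corr w (z j) + corr w (z k) - 2*a)\<^sup>2"
      by (simp add: Delta_def power2_eq_square algebra_simps)
    hence "Delta w z j k \<ge> 0" by (meson order_trans zero_le_power2)
    then show ?thesis using sym jk by blast
  qed
qed


lemma alpha_part: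
  fixes w :: "'a::real_inner" and z :: "nat \<Rightarrow> 'a"
  assumes w1: "norm w = 1"
   and zn: "\<And>k. k<K \<Longrightarrow> z k = 0 \<or> norm (z k) = 1"
   and wz: "\<And>k. k<K \<Longrightarrow> inner w (z k) \<ge> 0"
   and pair: "\<exists>j k. j < k \<and> k < K \<and> Delta w z j k \<ge> 0"
  shows "(\<exists>a. is_alpha K w z a)
       \<and> (\<forall>a. is_alpha K w z a \<longrightarrow> a \<in> cand_alphas K w z \<and> (\<forall>b \<in> cand_alphas K w z. \<bar>a\<bar> \<le> \<bar>b\<bar>))"
proof -
  define S where "S j k = corr w (z j) + corr w (z k)" for j k
  define R where "R j k a \<longleftrightarrow> Delta w z j k \<ge> 0 \<and>
     (a = (S j k - sqrt (Delta w z j k))/2 \<or> a = (S j k + sqrt (Delta w z j k))/2)" for j k a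
  have Snn: "S j k \<ge> 0" if "j < K" "k < K" for j k
    using corr_inner[OF w1 zn[OF that(1)]] corr_inner[OF w1 zn[OF that(2)]] wz[OF that(1)] wz[OF that(2)]
    by (simp add: S_def)
  have Rsym: "R j k a = R k j a" for j k a
  proof -
    have d: "Delta w z k j = Delta w z j k" by (rule Delta_commute)
    have s: "S k j = S j k" by (simp add: S_def)
    show ?thesis unfolding R_def d s ..
  qed
  have Req: "inner (z j - a *\<^sub>R w) (z k - a *\<^sub>R w) = 0 \<longleftrightarrow> R j k a" if "j < K" "k < K" for j k a
  proof -
    have e: "inner (z j - a *\<^sub>R w) (z k - a *\<^sub>R w) = a\<^sup>2 - S j k * a + corr (z j) (z k)"
      unfolding S_def by (rule quad_eq[OF w1 zn[OF that(1)] zn[OF that(2)]])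
    have d: "Delta w z j k = (S j k)\<^sup>2 - 4 * corr (z j) (z k)" by (simp add: Delta_def S_def)
    show ?thesis unfolding e R_def d by (rule quad_roots)
  qed
  have orth_iff: "a \<in> orth_alphas K w z \<longleftrightarrow> (\<exists>j k. j < k \<and> k < K \<and> R j k a)" for a
  proof
    assume "a \<in> orth_alphas K w z"
    then obtain j k where jk0: "j < K" "k < K" "j \<noteq> k" "inner (z j - a *\<^sub>R w) (z k - a *\<^sub>R w) = 0"
      unfolding orth_alphas_def by blast
    have jk: "j < K" "k < K" "j \<noteq> k" "R j k a" using jk0 Req[OF jk0(1,2)] by auto
    show "\<exists>j k. j < k \<and> k < K \<and> R j k a"
    proof (cases "j < k")
      case True then show ?thesis using jk by blast
    next
      case False then show ?thesis using jk Rsym by (metis linorder_neqE_nat)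
    qed
  next
    assume "\<exists>j k. j < k \<and> k < K \<and> R j k a"
    then obtain j k where jk: "j < k" "k < K" "R j k a" by blast
    have "j < K" "j \<noteq> k" using jk by auto
    then show "a \<in> orth_alphas K w z" unfolding orth_alphas_def using Req[of j k a] jk by blast
  qed
  have cand_eq: "cand_alphas K w z = {(S j k - sqrt (Delta w z j k))/2 | j k. j < k \<and> k < K \<and> Delta w z j k \<ge> 0}"
    unfolding cand_alphas_def S_def ..
  have cand_sub: "cand_alphas K w z \<subseteq> orth_alphas K w z"
  proof
    fix b assume "b \<in> cand_alphas K w z"
    then obtain j k where "j < k" "k < K" "Delta w z j k \<ge> 0" "b = (S j k - sqrt (Delta w z j k))/2"
      unfolding cand_eq by blast
    then have "R j k b" unfolding R_def by blast
    then show "b \<in> orth_alphas K w z" using orth_iff \<open>j < k\<close> \<open>k < K\<close> by blast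
  qed
  have cand_fin: "finite (cand_alphas K w z)"
  proof (rule finite_subset)
    show "cand_alphas K w z \<subseteq> (\<lambda>(j,k). (S j k - sqrt (Delta w z j k))/2) ` ({..<K} \<times> {..<K})"
    proof
      fix b assume "b \<in> cand_alphas K w z"
      then obtain j k where "j < k" "k < K" "b = (S j k - sqrt (Delta w z j k))/2"
        unfolding cand_eq by blast
      then show "b \<in> (\<lambda>(j,k). (S j k - sqrt (Delta w z j k))/2) ` ({..<K} \<times> {..<K})"
        by (intro image_eqI[where x="(j,k)"]) auto
    qed
  qed auto
  have cand_ne: "cand_alphas K w z \<noteq> {}"
  proof -
    obtain j k where "j < k" "k < K" "Delta w z j k \<ge> 0" using pair by blast
    then have "(S j k - sqrt (Delta w z j k))/2 \<in> cand_alphas K w z" unfolding cand_eq by blast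
    then show ?thesis by blast
  qed
  define A where "A = abs ` cand_alphas K w z"
  have finA: "finite A" unfolding A_def using cand_fin by (rule finite_imageI)
  have neA: "A \<noteq> {}" unfolding A_def using cand_ne by simp
  have "Min A \<in> A" by (rule Min_in[OF finA neA])
  then obtain m where m: "m \<in> cand_alphas K w z" "\<bar>m\<bar> = Min A" unfolding A_def by (rule imageE) simp
  have mmin: "\<bar>m\<bar> \<le> \<bar>b\<bar>" if "b \<in> cand_alphas K w z" for b
  proof -
    have "\<bar>b\<bar> \<in> A" unfolding A_def using that by (rule imageI)
    then show ?thesis unfolding m(2) by (rule Min_le[OF finA])
  qed
  have morth: "\<bar>m\<bar> \<le> \<bar>b\<bar>" if bo: "b \<in> orth_alphas K w z" for b
  proof -
    obtain j k where jk: "j < k" "k < K" "R j k b" using orth_iff[THEN iffD1, OF bo] by blast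
    define t where "t = sqrt (Delta w z j k)"
    have D0: "Delta w z j k \<ge> 0" using jk(3)[unfolded R_def] by (rule conjunct1)
    have t0: "t \<ge> 0" unfolding t_def using D0 by (rule real_sqrt_ge_zero)
    have S0: "S j k \<ge> 0" using jk by (intro Snn) auto
    have rc: "(S j k - t)/2 \<in> cand_alphas K w z" unfolding cand_eq t_def using jk(1,2) D0 by blast
    have bb: "b = (S j k - t)/2 \<or> b = (S j k + t)/2" using jk(3) unfolding R_def t_def by blast
    have le: "\<bar>(S j k - t)/2\<bar> \<le> (S j k + t)/2" using t0 S0 by (simp add: abs_le_iff)
    have "\<bar>(S j k - t)/2\<bar> \<le> \<bar>b\<bar>"
    proof (cases "b = (S j k - t)/2")
      case True then show ?thesis by simp
    next
      case False then have "b = (S j k + t)/2" using bb by blast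
      then show ?thesis using le t0 S0 by simp
    qed
    then show ?thesis using mmin[OF rc] by linarith
  qed
  have ex: "\<exists>a. is_alpha K w z a"
  proof (cases "- \<bar>m\<bar> \<in> orth_alphas K w z")
    case True
    have "is_alpha K w z (- \<bar>m\<bar>)" unfolding is_alpha_def using True morth by auto
    then show ?thesis by blast
  next
    case False
    have mo: "m \<in> orth_alphas K w z" using m cand_sub by blast
    then have "m = \<bar>m\<bar>" using False by (cases "m \<ge> 0") auto
    then have "is_alpha K w z m" unfolding is_alpha_def using False mo morth by auto
    then show ?thesis by blast
  qed
  have all: "a \<in> cand_alphas K w z \<and> (\<forall>b \<in> cand_alphas K w z. \<bar>a\<bar> \<le> \<bar>b\<bar>)" if ia: "is_alpha K w z a" for a
  proof -
    have ao: "a \<in> orth_alphas K w z" and amin: "\<And>b. b \<in> orth_alphas K w z \<Longrightarrow> \<bar>a\<bar> \<le> \<bar>b\<bar>"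
      and tie: "a \<noteq> 0 \<and> - a \<in> orth_alphas K w z \<longrightarrow> a < 0"
      using ia unfolding is_alpha_def by auto
    obtain j k where jk: "j < k" "k < K" "R j k a" using orth_iff[THEN iffD1, OF ao] by blast
    define t where "t = sqrt (Delta w z j k)"
    have D0: "Delta w z j k \<ge> 0" using jk(3)[unfolded R_def] by (rule conjunct1)
    have t0: "t \<ge> 0" unfolding t_def using D0 by (rule real_sqrt_ge_zero)
    have S0: "S j k \<ge> 0" using jk by (intro Snn) auto
    have rc: "(S j k - t)/2 \<in> cand_alphas K w z" unfolding cand_eq t_def using jk(1,2) D0 by blast
    have ro: "(S j k - t)/2 \<in> orth_alphas K w z" using rc cand_sub by blast
    have "a \<in> cand_alphas K w z"
    proof (cases "a = (S j k - t)/2")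
      case True then show ?thesis using rc by (simp only:)
    next
      case False
      have "a = (S j k - t)/2 \<or> a = (S j k + t)/2" using jk(3) unfolding R_def t_def by blast
      then have ap: "a = (S j k + t)/2" using False by blast
      have "\<bar>a\<bar> \<le> \<bar>(S j k - t)/2\<bar>" using amin[OF ro] .
      moreover have "\<bar>a\<bar> = a" using ap t0 S0 by simp
      ultimately have h: "(S j k + t)/2 \<le> \<bar>(S j k - t)/2\<bar>" using ap by simp
      have "t = 0 \<or> S j k = 0"
      proof (cases "S j k \<ge> t")
        case True then have e: "\<bar>(S j k - t)/2\<bar> = (S j k - t)/2" by simp
        have "(S j k + t)/2 \<le> (S j k - t)/2" using h unfolding e .
        then have "t = 0" using t0 by simp
        then show ?thesis by simp
      next
        case False then have e: "\<bar>(S j k - t)/2\<bar> = (t - S j k)/2" by simp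
        have "(S j k + t)/2 \<le> (t - S j k)/2" using h unfolding e .
        then have "S j k = 0" using S0 by simp
        then show ?thesis by simp
      qed
      then show ?thesis
      proof
        assume "t = 0" then show ?thesis using ap rc by (simp only: diff_zero add_0_right)
      next
        assume S: "S j k = 0"
        show ?thesis
        proof (cases "a = 0")
          case True then have "t = 0" using ap S by simp
          then show ?thesis using ap rc by (simp only: diff_zero add_0_right)
        next
          case False
          have "- a = (S j k - t)/2" using ap S by simp
          then have "- a \<in> orth_alphas K w z" using ro by (simp only:)
          then have "a < 0" using tie False by blast
          then show ?thesis using ap S t0 by simp
        qed
      qed
    qed
    moreover have "\<forall>b \<in> cand_alphas K w z. \<bar>a\<bar> \<le> \<bar>b\<bar>" using amin cand_sub by blast
    ultimately show ?thesis by blast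
  qed
  show ?thesis using ex all by blast
qed



lemma col_orth:
  fixes \<eta> :: "nat \<Rightarrow> 'i \<Rightarrow> real"
  assumes fin: "finite I"
    and orth: "\<And>m n. m < card I \<Longrightarrow> n < card I \<Longrightarrow> (\<Sum>q\<in>I. \<eta> m q * \<eta> n q) = (if m = n then 1 else 0)"
    and q: "q \<in> I" "q' \<in> I"
  shows "(\<Sum>m<card I. \<eta> m q * \<eta> m q') = (if q = q' then 1 else 0)"
proof -
  define N where "N = card I"
  obtain h where h: "bij_betw h I {0..<N}" using ex_bij_betw_finite_nat[OF fin] unfolding N_def by blast
  define g where "g = inv_into I h"
  have g: "bij_betw g {0..<N} I" unfolding g_def using h by (rule bij_betw_inv_into)
  define A :: "real mat" where "A = mat N N (\<lambda>(m,i). \<eta> m (g i))"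
  have A: "A \<in> carrier_mat N N" unfolding A_def by simp
  have AT: "transpose_mat A \<in> carrier_mat N N" using A by simp
  have "A * transpose_mat A = 1\<^sub>m N"
  proof (rule eq_matI)
    fix m n assume mn: "m < dim_row (1\<^sub>m N :: real mat)" "n < dim_col (1\<^sub>m N :: real mat)"
    then have mn': "m < N" "n < N" by auto
    have "(A * transpose_mat A) $$ (m, n) = (\<Sum>i<N. \<eta> m (g i) * \<eta> n (g i))"
      using mn' A by (simp add: A_def scalar_prod_def lessThan_atLeast0)
    also have "\<dots> = (\<Sum>q\<in>I. \<eta> m q * \<eta> n q)"
      using sum.reindex_bij_betw[OF g, of "\<lambda>q. \<eta> m q * \<eta> n q"] by (simp add: lessThan_atLeast0)
    also have "\<dots> = (if m = n then 1 else 0)" using orth mn' unfolding N_def by simp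
    finally show "(A * transpose_mat A) $$ (m, n) = 1\<^sub>m N $$ (m, n)" using mn' by simp
  qed (use A in auto)
  then have TA: "transpose_mat A * A = 1\<^sub>m N" by (rule mat_mult_left_right_inverse[OF A AT])
  have hq: "h q < N" "h q' < N" using h q by (auto simp: bij_betw_def)
  have gh: "g (h q) = q" "g (h q') = q'" unfolding g_def using h q by (auto simp: bij_betw_def)
  have "(transpose_mat A * A) $$ (h q, h q') = (\<Sum>m<N. \<eta> m q * \<eta> m q')"
    using hq A gh by (simp add: A_def scalar_prod_def lessThan_atLeast0)
  moreover have "h q = h q' \<longleftrightarrow> q = q'" using h q by (auto simp: bij_betw_def inj_on_def)
  ultimately show ?thesis using TA hq unfolding N_def by simp
qed



lemma inner_orth_sum:
  fixes u :: "nat \<Rightarrow> 'a::real_inner"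
  assumes "\<And>i j. i<n \<Longrightarrow> j<n \<Longrightarrow> inner (u i) (u j) = (if i=j then 1 else 0)"
  shows "inner (\<Sum>i<n. a i *\<^sub>R u i) (\<Sum>j<n. c j *\<^sub>R u j) = (\<Sum>i<n. a i * c i)"
proof -
  have "inner (\<Sum>i<n. a i *\<^sub>R u i) (\<Sum>j<n. c j *\<^sub>R u j) = (\<Sum>i<n. \<Sum>j<n. a i * c j * inner (u i) (u j))"
    by (simp add: inner_sum_left inner_sum_right sum_distrib_left mult.assoc)
       (subst sum.swap, simp add: mult.left_commute)
  also have "\<dots> = (\<Sum>i<n. \<Sum>j<n. if i = j then a i * c j else 0)"
    by (intro sum.cong refl) (simp add: assms)
  also have "\<dots> = (\<Sum>i<n. a i * c i)" by simp
  finally show ?thesis .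
qed

lemma span_UN_cong:
  fixes A :: "nat set"
  assumes "\<And>k. k \<in> A \<Longrightarrow> span (S k) = span (T k)"
  shows "span (\<Union>k\<in>A. S k) = span (\<Union>k\<in>A. T k)"
proof -
  have *: "span (\<Union>k\<in>A. S k) \<subseteq> span (\<Union>k\<in>A. T k)" if h: "\<And>k. k \<in> A \<Longrightarrow> span (S k) = span (T k)" for S T :: "nat \<Rightarrow> 'a set"
  proof -
    have "(\<Union>k\<in>A. S k) \<subseteq> span (\<Union>k\<in>A. T k)"
    proof
      fix x assume "x \<in> (\<Union>k\<in>A. S k)"
      then obtain k where k: "k \<in> A" "x \<in> S k" by blast
      then have "x \<in> span (T k)" using h[OF k(1)] span_base by blast
      moreover have "span (T k) \<subseteq> span (\<Union>k\<in>A. T k)" using k(1) by (intro span_mono) blast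
      ultimately show "x \<in> span (\<Union>k\<in>A. T k)" by blast
    qed
    then show ?thesis by (metis span_mono span_span)
  qed
  show ?thesis using *[of S T] *[of T S] assms by (metis subset_antisym)
qed

theorem theorem2:
  fixes K :: nat
    and p r :: "nat \<Rightarrow> nat"
    and x f :: "nat \<Rightarrow> nat \<Rightarrow> 'a::real_inner"
    and rf :: nat
    and eta :: "nat \<Rightarrow> nat \<times> nat \<Rightarrow> real"
    and lam :: "nat \<Rightarrow> real"
    and l :: nat
  assumes K2: "K \<ge> 2"
    and r_dim: "\<And>k. k < K \<Longrightarrow> r k = dim (span {x k i | i. i < p k})"
    and r_pos: "\<And>k. k < K \<Longrightarrow> r k \<ge> 1"
    and rf_def: "rf = dim (span (\<Union>k<K. {x k i | i. i < p k}))"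
    and f_orth: "\<And>k i i'. k < K \<Longrightarrow> i < r k \<Longrightarrow> i' < r k \<Longrightarrow>
                   inner (f k i) (f k i') = (if i = i' then 1 else 0)"
    and f_span: "\<And>k. k < K \<Longrightarrow> span {f k i | i. i < r k} = span {x k i | i. i < p k}"
    and eta_orth: "\<And>m n. m < card (idx K r) \<Longrightarrow> n < card (idx K r) \<Longrightarrow>
                   (\<Sum>q\<in>idx K r. eta m q * eta n q) = (if m = n then 1 else 0)"
    and eta_eig: "\<And>m q. m < card (idx K r) \<Longrightarrow> q \<in> idx K r \<Longrightarrow>
                   (\<Sum>q'\<in>idx K r. covf f q q' * eta m q') = lam m * eta m q"
    and lam_sorted: "\<And>m n. m \<le> n \<Longrightarrow> n < card (idx K r) \<Longrightarrow> lam n \<le> lam m"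
    and l_le: "l < rf"
  shows "(\<exists>j k. j < k \<and> k < K \<and>
            Delta (wvec K r f (lam l) (eta l)) (zvec r f (eta l)) j k \<ge> 0)
       \<and> (\<exists>a. is_alpha K (wvec K r f (lam l) (eta l)) (zvec r f (eta l)) a)
       \<and> (\<forall>a. is_alpha K (wvec K r f (lam l) (eta l)) (zvec r f (eta l)) a \<longrightarrow>
            a \<in> cand_alphas K (wvec K r f (lam l) (eta l)) (zvec r f (eta l)) \<and>
            (\<forall>b \<in> cand_alphas K (wvec K r f (lam l) (eta l)) (zvec r f (eta l)). \<bar>a\<bar> \<le> \<bar>b\<bar>))"
proof -
  define I where "I = idx K r"
  define N where "N = card I"
  define F where "F q = f (fst q) (snd q)" for q
  define v where "v m = (\<Sum>q\<in>I. eta m q *\<^sub>R F q)" for m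
  have finI: "finite I" unfolding I_def idx_def by simp
  have memI: "(k, i) \<in> I \<longleftrightarrow> k < K \<and> i < r k" for k i unfolding I_def idx_def by simp
  have eorth: "\<And>m n. m < N \<Longrightarrow> n < N \<Longrightarrow> (\<Sum>q\<in>I. eta m q * eta n q) = (if m = n then 1 else 0)"
    using eta_orth unfolding N_def I_def by blast
  have vF: "inner (v m) (F q) = lam m * eta m q" if "m < N" "q \<in> I" for m q
  proof -
    have "inner (v m) (F q) = (\<Sum>q'\<in>I. eta m q' * inner (F q') (F q))"
      unfolding v_def by (simp add: inner_sum_left)
    also have "\<dots> = (\<Sum>q'\<in>I. covf f q q' * eta m q')"
      by (intro sum.cong refl) (simp add: covf_def F_def inner_commute)
    also have "\<dots> = lam m * eta m q" using eta_eig that unfolding N_def I_def by blast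
    finally show ?thesis .
  qed
  have vv: "inner (v m) (v m) = lam m" if "m < N" for m
  proof -
    have "inner (v m) (v m) = (\<Sum>q\<in>I. eta m q * inner (v m) (F q))"
      by (simp add: v_def[of m] inner_sum_right)
    also have "\<dots> = (\<Sum>q\<in>I. lam m * (eta m q * eta m q))"
      by (intro sum.cong refl) (simp add: vF that)
    also have "\<dots> = lam m" using eorth[OF that that] by (simp add: sum_distrib_left[symmetric])
    finally show ?thesis .
  qed
  have FI: "(\<Union>k<K. {f k i | i. i < r k}) = F ` I"
  proof (rule Set.set_eqI, rule iffI)
    fix y assume "y \<in> (\<Union>k<K. {f k i | i. i < r k})"
    then obtain k i where ki: "k < K" "i < r k" "y = f k i" by blast
    then show "y \<in> F ` I" using memI by (intro image_eqI[where x="(k,i)"]) (auto simp: F_def)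
  next
    fix y assume "y \<in> F ` I"
    then obtain k i where "(k,i) \<in> I" "y = F (k,i)" by auto
    then show "y \<in> (\<Union>k<K. {f k i | i. i < r k})" by (auto simp: memI F_def)
  qed
  have rf_eq: "rf = dim (F ` I)"
  proof -
    have "span (\<Union>k<K. {x k i | i. i < p k}) = span (\<Union>k<K. {f k i | i. i < r k})"
      using f_span by (intro span_UN_cong) auto
    then show ?thesis unfolding rf_def FI by (metis dim_span)
  qed
  have rfN: "rf \<le> N"
  proof -
    have "dim (F ` I) \<le> card (F ` I)" using finI by (intro dim_le_card') simp
    also have "\<dots> \<le> N" unfolding N_def using finI by (rule card_image_le)
    finally show ?thesis using rf_eq by simp
  qed
  have lN: "l < N" using l_le rfN by simp
  have lpos: "lam l > 0"
  proof (rule ccontr)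
    assume "\<not> lam l > 0"
    then have ll: "lam l \<le> 0" by simp
    have v0: "v m = 0" if "l \<le> m" "m < N" for m
    proof -
      have "lam m \<le> 0" using lam_sorted[OF that[unfolded N_def I_def]] ll by simp
      moreover have "lam m \<ge> 0" using vv[OF that(2)] by (metis inner_ge_zero)
      ultimately have "inner (v m) (v m) = 0" using vv[OF that(2)] by simp
      then show ?thesis by simp
    qed
    have Fspan: "F q \<in> span (v ` {..<l})" if q: "q \<in> I" for q
    proof -
      have "(\<Sum>m<N. eta m q *\<^sub>R v m) = (\<Sum>m<N. \<Sum>q'\<in>I. (eta m q * eta m q') *\<^sub>R F q')"
        by (simp add: v_def scaleR_sum_right)
      also have "\<dots> = (\<Sum>q'\<in>I. (\<Sum>m<N. eta m q * eta m q') *\<^sub>R F q')"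
        by (subst sum.swap) (simp add: scaleR_sum_left)
      also have "\<dots> = (\<Sum>q'\<in>I. (if q = q' then F q' else 0))"
        using col_orth[OF finI eta_orth[folded I_def], OF _ _ q] unfolding N_def
        by (intro sum.cong refl) simp
      also have "\<dots> = F q" using q finI by simp
      finally have e1: "F q = (\<Sum>m<N. eta m q *\<^sub>R v m)" by simp
      have "(\<Sum>m<N. eta m q *\<^sub>R v m) = (\<Sum>m<l. eta m q *\<^sub>R v m)"
        using lN v0 by (intro sum.mono_neutral_right) auto
      then have "F q = (\<Sum>m<l. eta m q *\<^sub>R v m)" using e1 by simp
      also have "\<dots> \<in> span (v ` {..<l})"
        by (intro span_sum span_scale span_base) auto
      finally show ?thesis .
    qed
    have "rf \<le> card (v ` {..<l})" unfolding rf_eq using Fspan by (intro dim_le_card) auto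
    also have "\<dots> \<le> l" using card_image_le[of "{..<l}" v] by simp
    finally show False using l_le by simp
  qed
  define w where "w = wvec K r f (lam l) (eta l)"
  define z where "z = zvec r f (eta l)"
  define b where "b k = blocknorm r (eta l) k" for k
  define c where "c = inverse (sqrt (lam l))"
  have w_eq: "w = c *\<^sub>R v l" unfolding w_def wvec_def v_def F_def I_def c_def ..
  have c2: "c * c * lam l = 1" unfolding c_def using lpos
    by (simp add: field_simps)
  have cpos: "c > 0" unfolding c_def using lpos by simp
  have w1: "norm w = 1"
  proof -
    have "inner w w = c * c * lam l" using vv[OF lN] by (simp add: w_eq)
    then have "inner w w = 1" using c2 by simp
    then show ?thesis by (simp add: norm_eq_sqrt_inner)
  qed
  have z_eq: "z k = (if (\<forall>i<r k. eta l (k, i) = 0) then 0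
     else (\<Sum>i<r k. (eta l (k, i) / b k) *\<^sub>R f k i))" for k
    unfolding z_def zvec_def b_def ..
  have bsq: "(b k)\<^sup>2 = (\<Sum>i<r k. (eta l (k, i))\<^sup>2)" for k
    unfolding b_def blocknorm_def by (simp add: sum_nonneg)
  have bpos: "b k > 0" if nz: "\<not> (\<forall>i<r k. eta l (k, i) = 0)" for k
  proof -
    obtain i where i: "i < r k" "eta l (k, i) \<noteq> 0" using nz by blast
    have "(\<Sum>i<r k. (eta l (k, i))\<^sup>2) > 0" using i by (intro sum_pos2[where i=i]) auto
    then show ?thesis unfolding b_def blocknorm_def by simp
  qed
  have zsum: "(\<Sum>i<r k. eta l (k, i) *\<^sub>R f k i) = b k *\<^sub>R z k" for k
  proof (cases "\<forall>i<r k. eta l (k, i) = 0")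
    case True then show ?thesis by (simp add: z_eq)
  next
    case False
    then have "b k \<noteq> 0" using bpos by force
    then show ?thesis using False by (simp add: z_eq scaleR_sum_right)
  qed
  have zn: "z k = 0 \<or> norm (z k) = 1" if k: "k < K" for k
  proof (cases "\<forall>i<r k. eta l (k, i) = 0")
    case True then show ?thesis by (simp add: z_eq)
  next
    case False
    have bk: "b k > 0" using bpos[OF False] .
    have "inner (z k) (z k) = (\<Sum>i<r k. (eta l (k, i) / b k) * (eta l (k, i) / b k))"
      using False by (simp add: z_eq inner_orth_sum f_orth[OF k])
    also have "\<dots> = (\<Sum>i<r k. (eta l (k, i))\<^sup>2) / (b k)\<^sup>2"
      by (simp add: sum_divide_distrib power2_eq_square)
    also have "\<dots> = 1" using bk by (simp add: bsq[symmetric])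
    finally show ?thesis by (simp add: norm_eq_sqrt_inner)
  qed
  have wz: "inner w (z k) \<ge> 0" if k: "k < K" for k
  proof (cases "\<forall>i<r k. eta l (k, i) = 0")
    case True then show ?thesis by (simp add: z_eq)
  next
    case False
    have bk: "b k > 0" using bpos[OF False] .
    have "inner w (z k) = (\<Sum>i<r k. (eta l (k, i) / b k) * inner w (f k i))"
      using False by (simp add: z_eq inner_sum_right)
    also have "\<dots> = (\<Sum>i<r k. (c * lam l / b k) * (eta l (k, i))\<^sup>2)"
    proof (intro sum.cong refl)
      fix i assume "i \<in> {..<r k}"
      then have q: "(k, i) \<in> I" using k memI by simp
      have "inner w (f k i) = c * (lam l * eta l (k, i))"
        using vF[OF lN q] by (simp add: w_eq F_def)
      then show "(eta l (k, i) / b k) * inner w (f k i) = (c * lam l / b k) * (eta l (k, i))\<^sup>2"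
        by (simp add: power2_eq_square)
    qed
    also have "\<dots> \<ge> 0" using bk cpos lpos by (intro sum_nonneg) simp
    finally show ?thesis .
  qed
  have vsum: "v l = (\<Sum>k<K. \<Sum>i<r k. eta l (k, i) *\<^sub>R f k i)"
  proof -
    have "v l = (\<Sum>q\<in>Sigma {..<K} (\<lambda>k. {..<r k}). case_prod (\<lambda>k i. eta l (k, i) *\<^sub>R f k i) q)"
      unfolding v_def I_def idx_def by (intro sum.cong refl) (auto simp: F_def)
    also have "\<dots> = (\<Sum>k<K. \<Sum>i<r k. eta l (k, i) *\<^sub>R f k i)" by (rule sum.Sigma[symmetric]) auto
    finally show ?thesis .
  qed
  have wsum: "w = (\<Sum>k<K. (c * b k) *\<^sub>R z k)"
    unfolding w_eq vsum zsum by (simp add: scaleR_sum_right)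
  have bpos': "c * b k > 0" if "k < K" "z k \<noteq> 0" for k
  proof -
    have "\<not> (\<forall>i<r k. eta l (k, i) = 0)" proof
      assume "\<forall>i<r k. eta l (k, i) = 0"
      then have "z k = 0" by (simp add: z_eq)
      then show False using that(2) by simp
    qed
    then show ?thesis using bpos cpos by simp
  qed
  have pair: "\<exists>j k. j < k \<and> k < K \<and> Delta w z j k \<ge> 0"
    by (rule exists_pair[OF K2 w1 zn wsum bpos'])
  have "(\<exists>a. is_alpha K w z a)
       \<and> (\<forall>a. is_alpha K w z a \<longrightarrow> a \<in> cand_alphas K w z \<and> (\<forall>b \<in> cand_alphas K w z. \<bar>a\<bar> \<le> \<bar>b\<bar>))"
    by (rule alpha_part[OF w1 zn wz pair])
  then show ?thesis using pair unfolding w_def z_def by blast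
qed

end
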